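(* Let $k\ge1$ be an integer, $\alpha,\beta>0$, $b>0$, $\omega,\eta\in\mathbb{C}$ with $|\omega|=|\eta|=1$, $u,v\in[-1,1]$. Put $r=\sqrt{s^2+b^2}$, $R=s+r$, $w=-ib/R$, $X(u,v)=(\mathrm{Im}\,\omega^{k})(\mathrm{Im}\,\eta^{k})u+(\mathrm{Re}\,\omega^{k})(\mathrm{Re}\,\eta^{k})v$, $q(u,v)=\arccos X(u,v)$, \[A(s,q)=\prod_{l=0}^{k-1}\Big(s+ib\cos\Big(\frac{q+2\pi l}{k}\Big)\Big),\qquad B(s)=s+ib\,\mathrm{Re}(\omega\bar\eta),\] \[f_{I_{2k}}(s)=\frac{2^{k(\alpha+\beta)}}{rR^{k(\alpha+\beta)}}\frac{1-w^2}{1-w^{2k}}\,\frac{1-2w^{k}\mathrm{Re}(\omega^{k}\bar\eta^{k})+w^{2k}}{1-2\mathrm{Re}(\omega\bar\eta)w+w^2}\,\frac{1-w^{2k}}{(1-2w^{k}X(u,v)+w^{2k})^{\alpha+\beta+1}},\] \[g_{I_{k}}(s)=\frac{2^{k\alpha}}{rR^{k\alpha}}\frac{1-w^2}{1-w^{2k}}\,\frac{1-2w^{k}\mathrm{Re}(\omega^{k}\bar\eta^{k})+w^{2k}}{1-2\mathrm{Re}(\omega\bar\eta)w+w^2}\,\frac{1-w^{2k}}{(1-2w^{k}X(u,1)+w^{2k})^{\alpha+1}}.\] Then, for $s$ real and sufficiently large, \[f_{I_{2k}}(s)=\frac{A(s,q(1,1))}{B(s)[A(s,q(u,v))]^{\alpha+\beta+1}}=\frac{1}{B(s)[A(s,q(u,v))]^{\alpha+\beta}}+\frac{(-ib)^{k}\cos(q(u-1,v-1))}{2^{k-1}B(s)[A(s,q(u,v))]^{\alpha+\beta+1}},\]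 \[g_{I_{k}}(s)=\frac{A(s,q(1,1))}{B(s)[A(s,q(u,1))]^{\alpha+1}}=\frac{1}{B(s)[A(s,q(u,1))]^{\alpha}}+\frac{(-ib)^{k}\cos(q(u-1,0))}{2^{k-1}B(s)[A(s,q(u,1))]^{\alpha+1}}.\]
   Context: Non-integer powers are principal branches; $\arccos$ is extended to complex arguments so that $\cos(\arccos X)=X$ (needed since $X(u-1,v-1)$ may lie outside $[-1,1]$). *)

theory Defs
  imports "HOL-Analysis.Analysis"
begin

definition Xf :: "nat \<Rightarrow> complex \<Rightarrow> complex \<Rightarrow> real \<Rightarrow> real \<Rightarrow> real" where
  "Xf k \<omega> \<eta> u v = Im (\<omega>^k) * Im (\<eta>^k) * u + Re (\<omega>^k) * Re (\<eta>^k) * v"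

text \<open>q(u,v) = arccos X(u,v), with the complex (principal) arccos so that cos (q) = X always\<close>
definition qf :: "nat \<Rightarrow> complex \<Rightarrow> complex \<Rightarrow> real \<Rightarrow> real \<Rightarrow> complex" where
  "qf k \<omega> \<eta> u v = Arccos (complex_of_real (Xf k \<omega> \<eta> u v))"

definition Af :: "nat \<Rightarrow> real \<Rightarrow> real \<Rightarrow> complex \<Rightarrow> complex" where
  "Af k b s q = (\<Prod>l<k. complex_of_real s + \<i> * complex_of_real b
       * cos ((q + 2 * complex_of_real pi * of_nat l) / of_nat k))"

definition Bf :: "real \<Rightarrow> complex \<Rightarrow> complex \<Rightarrow> real \<Rightarrow> complex" where
  "Bf b \<omega> \<eta> s = complex_of_real s + \<i> * complex_of_real b * complex_of_real (Re (\<omega> * cnj \<eta>))"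

definition rf :: "real \<Rightarrow> real \<Rightarrow> real" where
  "rf b s = sqrt (s^2 + b^2)"

definition Rf :: "real \<Rightarrow> real \<Rightarrow> real" where
  "Rf b s = s + rf b s"

definition wf :: "real \<Rightarrow> real \<Rightarrow> complex" where
  "wf b s = - \<i> * complex_of_real b / complex_of_real (Rf b s)"

definition Ff :: "nat \<Rightarrow> real \<Rightarrow> real \<Rightarrow> complex \<Rightarrow> complex \<Rightarrow> real \<Rightarrow> real \<Rightarrow> complex" where
  "Ff k \<gamma> b \<omega> \<eta> Y s =
    (let r = rf b s; R = Rf b s; w = wf b s in
     complex_of_real (2 powr (real k * \<gamma>) / (r * R powr (real k * \<gamma>)))
     * ((1 - w^2) / (1 - w^(2*k)))
     * ((1 - 2 * w^k * complex_of_real (Re (\<omega>^k * cnj \<eta> ^ k)) + w^(2*k))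
        / (1 - 2 * complex_of_real (Re (\<omega> * cnj \<eta>)) * w + w^2))
     * ((1 - w^(2*k)) / ((1 - 2 * w^k * complex_of_real Y + w^(2*k)) powr complex_of_real (\<gamma> + 1))))"

definition fI2k :: "nat \<Rightarrow> real \<Rightarrow> real \<Rightarrow> real \<Rightarrow> complex \<Rightarrow> complex \<Rightarrow> real \<Rightarrow> real \<Rightarrow> real \<Rightarrow> complex" where
  "fI2k k \<alpha> \<beta> b \<omega> \<eta> u v s = Ff k (\<alpha> + \<beta>) b \<omega> \<eta> (Xf k \<omega> \<eta> u v) s"

definition gIk :: "nat \<Rightarrow> real \<Rightarrow> real \<Rightarrow> complex \<Rightarrow> complex \<Rightarrow> real \<Rightarrow> real \<Rightarrow> complex" where
  "gIk k \<alpha> b \<omega> \<eta> u s = Ff k \<alpha> b \<omega> \<eta> (Xf k \<omega> \<eta> u 1) s"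

end

theory Submission imports Defs "HOL-Computational_Algebra.Polynomial" begin

lemma prod_roots_gen:
  fixes x :: complex and k :: nat and z :: "nat \<Rightarrow> complex"
  assumes k: "k \<ge> 1" and zk: "\<And>l. l < k \<Longrightarrow> z l ^ k = 1" and inj: "inj_on z {..<k}"
  shows "(\<Prod>l<k. x - z l) = x ^ k - 1"
proof -
  define q where "q = (\<Prod>l<k. [:- z l, 1:])"
  define p where "p = (monom (1::complex) k - 1)"
  have dq: "degree q = k" unfolding q_def
    by (subst degree_prod_eq_sum_degree) auto
  have lq: "lead_coeff q = 1" unfolding q_def by (simp add: lead_coeff_prod)
  have dp: "degree p \<le> k" unfolding p_def
    by (intro degree_diff_le) (auto simp: degree_monom_le)
  have cardA: "card (z ` {..<k}) = k"
    using inj by (simp add: card_image)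
  have "p = q"
  proof (rule poly_eqI_degree_lead_coeff[of p k q "z ` {..<k}"])
    show "poly.coeff p k = poly.coeff q k" using lq dq k by (simp add: p_def)
    show "k \<le> card (z ` {..<k})" using cardA by simp
    show "degree p \<le> k" by fact
    show "degree q \<le> k" using dq by simp
    fix w assume "w \<in> z ` {..<k}"
    then obtain j where j: "j < k" "w = z j" by auto
    have "poly p w = w ^ k - 1" by (simp add: p_def poly_monom)
    also have "w ^ k = 1" using j zk by simp
    finally have 1: "poly p w = 0" by simp
    have "poly q w = (\<Prod>l<k. w - z l)" by (simp add: q_def poly_prod)
    also have "\<dots> = 0" using j by (intro prod_zero) auto
    finally show "poly p w = poly q w" using 1 by simp
  qed
  then have "poly q x = poly p x" by simp
  then show ?thesis by (simp add: q_def p_def poly_prod poly_monom)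
qed

lemma prod_roots_gen2:
  fixes a :: complex and k :: nat and z :: "nat \<Rightarrow> complex"
  assumes k: "k \<ge> 1" and zk: "\<And>l. l < k \<Longrightarrow> z l ^ k = 1" and inj: "inj_on z {..<k}"
  shows "(\<Prod>l<k. 1 - a * z l) = 1 - a ^ k"
proof (cases "a = 0")
  case True then show ?thesis using k by simp
next
  case False
  have "(\<Prod>l<k. 1 - a * z l) = (\<Prod>l<k. a * (inverse a - z l))"
    using False by (intro prod.cong) (auto simp: field_simps)
  also have "\<dots> = a ^ k * (\<Prod>l<k. inverse a - z l)"
    by (simp add: prod.distrib)
  also have "\<dots> = a ^ k * (inverse a ^ k - 1)"
    using prod_roots_gen[OF k zk inj] by simp
  also have "\<dots> = 1 - a ^ k" using False by (simp add: field_simps power_inverse)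
  finally show ?thesis .
qed

definition zeta :: "nat \<Rightarrow> nat \<Rightarrow> complex" where
  "zeta k l = exp (2 * of_real pi * \<i> * of_nat l / of_nat k)"

lemma zeta_pow: "k \<ge> 1 \<Longrightarrow> zeta k l ^ k = 1"
  unfolding zeta_def by (rule complex_root_unity) simp

lemma zeta_inj: "k \<ge> 1 \<Longrightarrow> inj_on (zeta k) {..<k}"
  unfolding zeta_def inj_on_def by (auto simp: complex_root_unity_eq)

lemma izeta_pow: "k \<ge> 1 \<Longrightarrow> inverse (zeta k l) ^ k = 1"
  by (simp add: power_inverse zeta_pow)

lemma izeta_inj: "k \<ge> 1 \<Longrightarrow> inj_on (\<lambda>l. inverse (zeta k l)) {..<k}"
  using zeta_inj unfolding inj_on_def by auto

lemma factor_cos: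
  fixes R s b :: real and \<theta> w :: complex
  assumes R: "R > 0" and RR: "R^2 = 2 * s * R + b^2" and w: "w = - \<i> * of_real b / of_real R"
  shows "of_real s + \<i> * of_real b * cos \<theta>
     = of_real (R/2) * ((1 - w * exp (\<i> * \<theta>)) * (1 - w * exp (- (\<i> * \<theta>))))"
proof -
  have e: "exp (\<i> * \<theta>) * exp (- (\<i> * \<theta>)) = 1" by (simp add: exp_minus)
  have s: "of_real s = (of_real R ^ 2 - of_real b ^ 2) / (2 * of_real R :: complex)"
    using R RR by (simp add: field_simps) (metis of_real_add of_real_mult of_real_numeral of_real_power)
  have "of_real (R/2) * ((1 - w * exp (\<i> * \<theta>)) * (1 - w * exp (- (\<i> * \<theta>))))
      = of_real (R/2) * (1 - w * (exp (\<i> * \<theta>) + exp (- (\<i> * \<theta>))) + w^2 * (exp (\<i> * \<theta>) * exp (- (\<i> * \<theta>))))"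
    by (simp add: algebra_simps power2_eq_square)
  also have "\<dots> = of_real s + \<i> * of_real b * cos \<theta>"
    unfolding e cos_exp_eq s w using R by (simp add: field_simps power2_eq_square)
  finally show ?thesis by simp
qed


lemma R_facts:
  assumes b: "b > 0"
  shows "Rf b s > 0" "(Rf b s)^2 = 2 * s * Rf b s + b^2" "rf b s > 0"
    "rf b s * rf b s = s^2 + b^2"
proof -
  have r2: "rf b s * rf b s = s^2 + b^2" unfolding rf_def
    by (simp add: add_nonneg_nonneg)
  have h1: "sqrt (s^2) < sqrt (s^2 + b^2)" by (rule real_sqrt_less_mono) (use b in simp)
  have h1': "sqrt (s^2) = \<bar>s\<bar>" by (rule real_sqrt_abs)
  have "\<bar>s\<bar> < rf b s" unfolding rf_def using h1 h1' by linarith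
  then show R: "Rf b s > 0" unfolding Rf_def by linarith
  show "(Rf b s)^2 = 2 * s * Rf b s + b^2" unfolding Rf_def using r2
    by (simp add: power2_eq_square algebra_simps)
  show "rf b s > 0" using \<open>\<bar>s\<bar> < rf b s\<close> by linarith
  show "rf b s * rf b s = s^2 + b^2" by fact
qed

lemma A_form:
  assumes k: "k \<ge> 1" and b: "b > 0"
  shows "Af k b s q = of_real ((Rf b s / 2) ^ k)
     * (1 - 2 * wf b s ^ k * cos q + wf b s ^ (2*k))"
proof -
  define R where "R = Rf b s"
  define w where "w = wf b s"
  define th where "th = (\<lambda>l::nat. (q + 2 * complex_of_real pi * of_nat l) / of_nat k)"
  have R: "R > 0" "R^2 = 2 * s * R + b^2" using R_facts[OF b] by (auto simp: R_def)
  have w: "w = - \<i> * of_real b / of_real R" by (simp add: w_def R_def wf_def)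
  define c where "c = exp (\<i> * q / of_nat k)"
  define c' where "c' = exp (- (\<i> * q) / of_nat k)"
  have kn: "(of_nat k :: complex) \<noteq> 0" using k by simp
  have a1: "\<i> * th l = \<i> * q / of_nat k + 2 * of_real pi * \<i> * of_nat l / of_nat k" for l
    unfolding th_def using kn by (simp add: field_simps)
  have e1: "exp (\<i> * th l) = c * zeta k l" for l
    unfolding a1 c_def zeta_def by (rule exp_add)
  have a2: "- (\<i> * th l) = - (\<i> * q) / of_nat k + - (2 * of_real pi * \<i> * of_nat l / of_nat k)" for l
    unfolding a1 by (simp add: field_simps)
  have e2: "exp (- (\<i> * th l)) = c' * inverse (zeta k l)" for l
    unfolding a2 c'_def zeta_def by (simp only: exp_add) (simp add: exp_minus)
  have ck: "c ^ k = exp (\<i> * q)" unfolding c_def using k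
    by (simp add: exp_of_nat_mult[symmetric])
  have ck': "c' ^ k = exp (- (\<i> * q))" unfolding c'_def using k
    by (simp add: exp_of_nat_mult[symmetric])
  have "Af k b s q = (\<Prod>l<k. of_real s + \<i> * of_real b * cos (th l))"
    by (simp add: Af_def th_def)
  also have "\<dots> = (\<Prod>l<k. of_real (R/2) * ((1 - w * exp (\<i> * th l)) * (1 - w * exp (- (\<i> * th l)))))"
    by (intro prod.cong refl factor_cos[OF R w])
  also have "\<dots> = of_real (R/2) ^ k * ((\<Prod>l<k. 1 - (w * c) * zeta k l) * (\<Prod>l<k. 1 - (w * c') * inverse (zeta k l)))"
    by (simp only: e1 e2 prod.distrib prod_constant card_lessThan mult.assoc)
  also have "(\<Prod>l<k. 1 - (w * c) * zeta k l) = 1 - (w * c) ^ k"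
    by (rule prod_roots_gen2[OF k zeta_pow[OF k] zeta_inj[OF k]])
  also have "(\<Prod>l<k. 1 - (w * c') * inverse (zeta k l)) = 1 - (w * c') ^ k"
    by (rule prod_roots_gen2[OF k izeta_pow[OF k] izeta_inj[OF k]])
  also have "(1 - (w * c) ^ k) * (1 - (w * c') ^ k) = 1 - 2 * w ^ k * cos q + w ^ (2*k)"
    unfolding power_mult_distrib ck ck' cos_exp_eq
    by (simp add: algebra_simps power_mult exp_minus power2_eq_square)
  finally show ?thesis by (simp add: R_def w_def)
qed


lemma A_q:
  assumes k: "k \<ge> 1" and b: "b > 0"
  shows "Af k b s (qf k \<omega> \<eta> u v) = of_real ((Rf b s / 2) ^ k)
     * (1 - 2 * wf b s ^ k * of_real (Xf k \<omega> \<eta> u v) + wf b s ^ (2*k))"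
  unfolding A_form[OF k b] qf_def by simp

lemma w_small:
  assumes b: "b > 0" and s: "s > 0"
  shows "norm (wf b s) < 1"
proof -
  have h2: "sqrt (b^2) < sqrt (s^2 + b^2)" by (rule real_sqrt_less_mono) (use s in simp)
  have h2': "sqrt (b^2) = b" using b by simp
  have r: "rf b s > b" unfolding rf_def using h2 h2' by linarith
  have "norm (wf b s) = b / Rf b s" unfolding wf_def using R_facts(1)[OF b, of s] b
    by (simp add: norm_divide norm_mult)
  also have "\<dots> < 1" using r s b unfolding Rf_def by simp
  finally show ?thesis .
qed

lemma Xf_lin: "Xf k \<omega> \<eta> (u - 1) (v - 1) = Xf k \<omega> \<eta> u v - Xf k \<omega> \<eta> 1 1"
  by (simp add: Xf_def algebra_simps)

lemma Re_X11: "Re (\<omega>^k * cnj \<eta> ^ k) = Xf k \<omega> \<eta> 1 1"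
proof -
  have e: "cnj \<eta> ^ k = cnj (\<eta> ^ k)" by simp
  show ?thesis unfolding e Xf_def by (simp del: complex_cnj_power)
qed

lemma alg2:
  fixes A B G t D :: complex
  assumes "A \<noteq> 0" "B \<noteq> 0" "G \<noteq> 0" "t \<noteq> 0"
  shows "(A + D / t) / (B * (G * A)) = 1 / (B * G) + D / (t * B * (G * A))"
  using assms by (simp add: field_simps)

lemma alg1:
  fixes x Dd B Pp T S c r w P1 :: complex
  assumes "x \<noteq> 0" "Dd \<noteq> 0" "B \<noteq> 0" "Pp \<noteq> 0" "T \<noteq> 0" "S \<noteq> 0" "c \<noteq> 0" "r \<noteq> 0"
    and key: "r * Dd = (1 - w^2) * B"
  shows "T / (r * S) * ((1 - w^2) / x) * (P1 / Dd) * (x / Pp) = c * P1 / (B * (c * (S / T) * Pp))"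
proof -
  have e: "1 - w^2 = r * Dd / B" using key assms by (simp add: field_simps)
  show ?thesis unfolding e using assms by (simp add: field_simps)
qed

lemma alg3:
  fixes c W V x y :: complex
  shows "c * (1 - 2 * W * x + V) - c * (1 - 2 * W * y + V) = - 2 * (c * W) * (x - y)"
  by (simp add: algebra_simps)

lemma alg4:
  fixes z x y :: complex
  assumes "k \<ge> 1"
  shows "- 2 * (z / 2) ^ k * (x - y) = z ^ k * (y - x) / 2 ^ (k - 1)"
proof -
  have k2: "(2::complex) ^ k = 2 * 2 ^ (k - 1)" using assms
    by (metis Suc_diff_le diff_Suc_1 power_Suc)
  show ?thesis unfolding power_divide k2 by (simp add: field_simps)
qed

lemma main_gen:
  fixes \<gamma> u v s b :: real
  assumes k: "k \<ge> 1" and b: "b > 0" and s: "s > 0"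
  shows "Ff k \<gamma> b \<omega> \<eta> (Xf k \<omega> \<eta> u v) s
       = Af k b s (qf k \<omega> \<eta> 1 1)
         / (Bf b \<omega> \<eta> s * Af k b s (qf k \<omega> \<eta> u v) powr complex_of_real (\<gamma> + 1))"
    "Af k b s (qf k \<omega> \<eta> 1 1)
         / (Bf b \<omega> \<eta> s * Af k b s (qf k \<omega> \<eta> u v) powr complex_of_real (\<gamma> + 1))
       = 1 / (Bf b \<omega> \<eta> s * Af k b s (qf k \<omega> \<eta> u v) powr complex_of_real \<gamma>)
         + (- \<i> * complex_of_real b) ^ k * cos (qf k \<omega> \<eta> (u - 1) (v - 1))
           / (2 ^ (k - 1) * Bf b \<omega> \<eta> s * Af k b s (qf k \<omega> \<eta> u v) powr complex_of_real (\<gamma> + 1))"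
proof -
  define R where "R = Rf b s"
  define r where "r = rf b s"
  define w where "w = wf b s"
  define cc where "cc = Re (\<omega> * cnj \<eta>)"
  define B where "B = Bf b \<omega> \<eta> s"
  define c where "c = (R / 2) ^ k"
  define P where "P = (\<lambda>x::real. 1 - 2 * w ^ k * of_real x + w ^ (2*k))"
  define XY where "XY = Xf k \<omega> \<eta> u v"
  define X1 where "X1 = Xf k \<omega> \<eta> 1 1"
  have Rp: "R > 0" and RR: "R^2 = 2 * s * R + b^2" and rp: "r > 0" and rr: "r * r = s^2 + b^2"
    using R_facts[OF b, of s] by (auto simp: R_def r_def)
  have Rr: "R = s + r" by (simp add: R_def r_def Rf_def)
  have cp: "c > 0" using Rp by (simp add: c_def)
  have AY: "Af k b s (qf k \<omega> \<eta> u v) = of_real c * P XY"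
    by (simp add: A_q[OF k b] c_def P_def XY_def R_def w_def)
  have A1: "Af k b s (qf k \<omega> \<eta> 1 1) = of_real c * P X1"
    by (simp add: A_q[OF k b] c_def P_def X1_def R_def w_def)
  have wn: "norm w < 1" using w_small[OF b s] by (simp add: w_def)
  have x0: "1 - w ^ (2*k) \<noteq> 0"
  proof
    assume "1 - w ^ (2*k) = 0"
    then have "norm (w ^ (2*k)) = 1" by (metis eq_iff_diff_eq_0 norm_one)
    moreover have "norm (w ^ (2*k)) < 1" using wn k
      by (simp add: norm_power power_less_one_iff norm_ge_zero)
    ultimately show False by simp
  qed
  have w20: "1 - w ^ 2 \<noteq> 0"
  proof
    assume "1 - w ^ 2 = 0"
    then have "norm (w ^ 2) = 1" by (metis eq_iff_diff_eq_0 norm_one)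
    moreover have "norm (w ^ 2) < 1" using wn
      by (simp add: norm_power power_less_one_iff norm_ge_zero)
    ultimately show False by simp
  qed
  have B0: "B \<noteq> 0"
  proof
    assume "B = 0" then have "Re B = 0" by simp
    then show False using s by (simp add: B_def Bf_def)
  qed
  have wdef: "w = - \<i> * of_real b / of_real R" by (simp add: w_def R_def wf_def)
  have key: "(1 - w^2) * B = of_real r * (1 - 2 * of_real cc * w + w^2)"
  proof -
    have e1: "R^2 + b^2 = 2 * r * R" using RR rr Rr by (simp add: power2_eq_square algebra_simps)
    have e2: "R^2 - b^2 = 2 * s * R" using RR by simp
    have "(1 - w^2) * B * of_real (R^2) = of_real (R^2 + b^2) * B"
      using Rp unfolding wdef by (simp add: field_simps power2_eq_square)
    also have "\<dots> = of_real r * (of_real (R^2 - b^2) + 2 * \<i> * of_real (b * cc * R))"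
      unfolding e1 e2 B_def Bf_def cc_def by (simp add: algebra_simps)
    also have "\<dots> = of_real r * (1 - 2 * of_real cc * w + w^2) * of_real (R^2)"
      using Rp unfolding wdef by (simp add: field_simps power2_eq_square)
    finally show ?thesis using Rp by (simp del: of_real_power)
  qed
  have D0: "1 - 2 * of_real cc * w + w^2 \<noteq> 0"
    using key w20 B0 by (metis mult_eq_0_iff)
  have Lpow: "(c powr (\<gamma> + 1)) = c * (R powr (real k * \<gamma>) / 2 powr (real k * \<gamma>))"
  proof -
    have "c powr (\<gamma> + 1) = (R/2) powr (real k * (\<gamma> + 1))"
      unfolding c_def using Rp by (simp add: powr_realpow[symmetric] powr_powr)
    also have "\<dots> = (R/2) powr (real k) * (R/2) powr (real k * \<gamma>)"
      by (simp add: powr_add[symmetric] algebra_simps)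
    also have "\<dots> = c * (R powr (real k * \<gamma>) / 2 powr (real k * \<gamma>))"
      unfolding c_def using Rp by (simp add: powr_realpow powr_divide power_divide)
    finally show ?thesis .
  qed
  have splitpow: "(of_real c * P XY) powr z = of_real (c powr Re z) * (P XY) powr z" if "z \<in> \<real>" for z
  proof -
    have "(of_real c * P XY) powr z = of_real c powr z * P XY powr z"
      using cp by (intro powr_times_real_left) auto
    also have "of_real c powr z = of_real (c powr Re z)"
      using cp that by (metis Reals_cases Re_complex_of_real less_eq_real_def powr_of_real)
    finally show ?thesis .
  qed
  have X1eq: "Re (\<omega>^k * cnj \<eta> ^ k) = X1" unfolding X1_def by (rule Re_X11)
  show "Ff k \<gamma> b \<omega> \<eta> (Xf k \<omega> \<eta> u v) s
       = Af k b s (qf k \<omega> \<eta> 1 1)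
         / (Bf b \<omega> \<eta> s * Af k b s (qf k \<omega> \<eta> u v) powr complex_of_real (\<gamma> + 1))"
  proof -
    define Pp where "Pp = P XY powr complex_of_real (\<gamma> + 1)"
    have rhs: "Af k b s (qf k \<omega> \<eta> 1 1)
         / (Bf b \<omega> \<eta> s * Af k b s (qf k \<omega> \<eta> u v) powr complex_of_real (\<gamma> + 1))
       = of_real c * P X1 / (B * (of_real (c * (R powr (real k * \<gamma>) / 2 powr (real k * \<gamma>))) * Pp))"
      unfolding A1 AY B_def[symmetric] Pp_def by (subst splitpow) (auto simp: Lpow)
    have lhs: "Ff k \<gamma> b \<omega> \<eta> (Xf k \<omega> \<eta> u v) s
      = of_real (2 powr (real k * \<gamma>) / (r * R powr (real k * \<gamma>)))
       * ((1 - w^2) / (1 - w^(2*k))) * (P X1 / (1 - 2 * of_real cc * w + w^2))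
       * ((1 - w^(2*k)) / Pp)"
      unfolding Ff_def Let_def Pp_def P_def X1eq XY_def[symmetric]
      by (simp add: r_def R_def w_def cc_def)
    have p2: "2 powr (real k * \<gamma>) > 0" "R powr (real k * \<gamma>) > 0" using Rp by auto
    show ?thesis
    proof (cases "Pp = 0")
      case True then show ?thesis unfolding lhs rhs by simp
    next
      case False
      have key': "of_real r * (1 - 2 * of_real cc * w + w^2) = (1 - w^2) * B" using key by simp
      show ?thesis unfolding lhs rhs of_real_mult of_real_divide
        by (rule alg1) (use False x0 D0 B0 p2 cp rp key' in auto)
    qed
  qed
  show "Af k b s (qf k \<omega> \<eta> 1 1)
         / (Bf b \<omega> \<eta> s * Af k b s (qf k \<omega> \<eta> u v) powr complex_of_real (\<gamma> + 1))
       = 1 / (Bf b \<omega> \<eta> s * Af k b s (qf k \<omega> \<eta> u v) powr complex_of_real \<gamma>)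
         + (- \<i> * complex_of_real b) ^ k * cos (qf k \<omega> \<eta> (u - 1) (v - 1))
           / (2 ^ (k - 1) * Bf b \<omega> \<eta> s * Af k b s (qf k \<omega> \<eta> u v) powr complex_of_real (\<gamma> + 1))"
  proof -
    define A where "A = Af k b s (qf k \<omega> \<eta> u v)"
    have cosq: "cos (qf k \<omega> \<eta> (u - 1) (v - 1)) = of_real (XY - X1)"
      by (simp add: qf_def Xf_lin XY_def X1_def)
    have Rw: "of_real R * w = - \<i> * of_real b" using Rp by (simp add: wdef)
    have cw: "of_real c * w^k = (of_real R * w / 2) ^ k"
      unfolding c_def by (simp add: power_mult_distrib power_divide)
    have "Af k b s (qf k \<omega> \<eta> 1 1) - A = - 2 * (of_real c * w^k) * of_real (X1 - XY)"
      unfolding A_def A1 AY P_def of_real_diff by (rule alg3)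
    also have "\<dots> = - 2 * (of_real R * w / 2) ^ k * of_real (X1 - XY)" by (simp only: cw)
    also have "\<dots> = (- \<i> * of_real b) ^ k * of_real (XY - X1) / 2 ^ (k - 1)"
      unfolding Rw of_real_diff by (rule alg4[OF k])
    finally have diff: "Af k b s (qf k \<omega> \<eta> 1 1) = A + (- \<i> * of_real b) ^ k * of_real (XY - X1) / 2 ^ (k - 1)"
      by (metis add.commute diff_add_cancel)
    show ?thesis
    proof (cases "A = 0")
      case True then show ?thesis unfolding A_def[symmetric] by simp
    next
      case False
      have pa: "A powr complex_of_real (\<gamma> + 1) = A powr complex_of_real \<gamma> * A"
        using False by (simp add: powr_add)
      have "A powr complex_of_real \<gamma> \<noteq> 0" using False by simp
      then show ?thesis unfolding A_def[symmetric] diff pa cosq B_def[symmetric]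
        by (intro alg2 False B0) simp_all
    qed
  qed
qed

theorem lemma15:
  fixes k :: nat and \<alpha> \<beta> b u v :: real and \<omega> \<eta> :: complex
  assumes "k \<ge> 1" and "\<alpha> > 0" and "\<beta> > 0" and "b > 0"
    and "norm \<omega> = 1" and "norm \<eta> = 1"
    and "u \<in> {-1..1}" and "v \<in> {-1..1}"
  shows "\<forall>\<^sub>F s in at_top.
     fI2k k \<alpha> \<beta> b \<omega> \<eta> u v s
       = Af k b s (qf k \<omega> \<eta> 1 1)
         / (Bf b \<omega> \<eta> s * Af k b s (qf k \<omega> \<eta> u v) powr complex_of_real (\<alpha> + \<beta> + 1))
   \<and> Af k b s (qf k \<omega> \<eta> 1 1)
         / (Bf b \<omega> \<eta> s * Af k b s (qf k \<omega> \<eta> u v) powr complex_of_real (\<alpha> + \<beta> + 1))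
       = 1 / (Bf b \<omega> \<eta> s * Af k b s (qf k \<omega> \<eta> u v) powr complex_of_real (\<alpha> + \<beta>))
         + (- \<i> * complex_of_real b) ^ k * cos (qf k \<omega> \<eta> (u - 1) (v - 1))
           / (2 ^ (k - 1) * Bf b \<omega> \<eta> s * Af k b s (qf k \<omega> \<eta> u v) powr complex_of_real (\<alpha> + \<beta> + 1))
   \<and> gIk k \<alpha> b \<omega> \<eta> u s
       = Af k b s (qf k \<omega> \<eta> 1 1)
         / (Bf b \<omega> \<eta> s * Af k b s (qf k \<omega> \<eta> u 1) powr complex_of_real (\<alpha> + 1))
   \<and> Af k b s (qf k \<omega> \<eta> 1 1)
         / (Bf b \<omega> \<eta> s * Af k b s (qf k \<omega> \<eta> u 1) powr complex_of_real (\<alpha> + 1))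
       = 1 / (Bf b \<omega> \<eta> s * Af k b s (qf k \<omega> \<eta> u 1) powr complex_of_real \<alpha>)
         + (- \<i> * complex_of_real b) ^ k * cos (qf k \<omega> \<eta> (u - 1) 0)
           / (2 ^ (k - 1) * Bf b \<omega> \<eta> s * Af k b s (qf k \<omega> \<eta> u 1) powr complex_of_real (\<alpha> + 1))"
proof -
  have "\<forall>\<^sub>F s in at_top. s > (0::real)" by (rule eventually_gt_at_top)
  then show ?thesis
  proof eventually_elim
    case (elim s)
    note f = main_gen[OF assms(1) assms(4) elim, where \<gamma>="\<alpha> + \<beta>" and u=u and v=v and \<omega>=\<omega> and \<eta>=\<eta>]
    note g = main_gen[OF assms(1) assms(4) elim, where \<gamma>="\<alpha>" and u=u and v=1 and \<omega>=\<omega> and \<eta>=\<eta>, unfolded diff_self]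
    show ?case unfolding fI2k_def gIk_def using f g by blast
  qed
qed

end
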